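(* Let $n\ge 1$, and let $E_1,\dots,E_n\in\mathbb{R}$ be the energy scores of a minibatch $B=\{x_i\}_{i=1}^n$. Define \[ \mu_B=\frac{1}{n}\sum_{j=1}^{n}E_j,\qquad s_B=\sqrt{\frac{1}{n}\sum_{j=1}^{n}(E_j-\mu_B)^2}, \] and, for constants $\epsilon_B>0$ and $\beta>0$, \[ \widetilde{E}_i=\frac{E_i-\mu_B}{s_B+\epsilon_B},\qquad w_i=\rho(-\beta\widetilde{E}_i),\qquad \rho(t)=\frac{1}{1+\exp(-t)}. \] If $n=1$, then $w_1=1/2$. If $n\ge 2$, then for every $i\in\{1,\dots,n\}$, \[ \rho\!\left(-\beta\sqrt{n-1}\right)\le w_i\le \rho\!\left(\beta\sqrt{n-1}\right). \] In particular, $0<w_i<1$ for all $i$.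
   Context: The $E_i$ are arbitrary real numbers (in the application, $E_i=E(x_i)$ is a disagreement score between a private and a proxy model on sample $x_i$); $w_i$ is called the trust weight of sample $x_i$. *)

theory Defs
  imports Complex_Main
begin

definition sigmoid :: "real \<Rightarrow> real" where
  "sigmoid t = 1 / (1 + exp (- t))"

definition batch_mean :: "nat \<Rightarrow> (nat \<Rightarrow> real) \<Rightarrow> real" where
  "batch_mean n E = (1 / real n) * (\<Sum>j=1..n. E j)"

definition batch_std :: "nat \<Rightarrow> (nat \<Rightarrow> real) \<Rightarrow> real" where
  "batch_std n E = sqrt ((1 / real n) * (\<Sum>j=1..n. (E j - batch_mean n E)^2))"

definition normalized_energy :: "nat \<Rightarrow> (nat \<Rightarrow> real) \<Rightarrow> real \<Rightarrow> nat \<Rightarrow> real" where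
  "normalized_energy n E eps i = (E i - batch_mean n E) / (batch_std n E + eps)"

definition trust_weight :: "nat \<Rightarrow> (nat \<Rightarrow> real) \<Rightarrow> real \<Rightarrow> real \<Rightarrow> nat \<Rightarrow> real" where
  "trust_weight n E eps \<beta> i = sigmoid (- \<beta> * normalized_energy n E eps i)"

end

theory Submission
  imports Defs "HOL-Analysis.Analysis"
begin

lemma sigmoid_mono: "a \<le> b \<Longrightarrow> sigmoid a \<le> sigmoid b"
  unfolding sigmoid_def
  by (simp add: frac_le add_pos_pos)

lemma sigmoid_bounds: "0 < sigmoid a \<and> sigmoid a < 1"
  unfolding sigmoid_def by (simp add: add_pos_pos)

lemma samuelson:
  fixes n :: nat and E :: "nat \<Rightarrow> real"
  assumes n: "n \<ge> 1" and i: "i \<in> {1..n}"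
  shows "\<bar>E i - batch_mean n E\<bar> \<le> sqrt (real n - 1) * batch_std n E"
proof -
  define \<mu> where "\<mu> = batch_mean n E"
  define d where "d j = E j - \<mu>" for j
  define S where "S = (\<Sum>j=1..n. (d j)^2)"
  have S0: "S \<ge> 0" unfolding S_def by (simp add: sum_nonneg)
  have sumd: "(\<Sum>j=1..n. d j) = 0"
    using n by (simp add: d_def sum_subtractf \<mu>_def batch_mean_def)
  define A where "A = {1..n} - {i}"
  have fA: "finite A" and cA: "card A = n - 1" using i by (auto simp: A_def)
  have split1: "(\<Sum>j=1..n. d j) = d i + (\<Sum>j\<in>A. d j)"
    using i unfolding A_def by (simp add: sum.remove)
  have split2: "S = (d i)^2 + (\<Sum>j\<in>A. (d j)^2)"
    using i unfolding A_def S_def by (simp add: sum.remove)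
  have "(\<Sum>j\<in>A. d j)^2 \<le> (\<Sum>j\<in>A. (d j)^2) * card A"
    by (rule sum_squared_le_sum_of_squares)
  hence "(d i)^2 \<le> (S - (d i)^2) * (real n - 1)"
  proof -
    have "(\<Sum>j\<in>A. d j) = - d i" using split1 sumd by simp
    hence "(\<Sum>j\<in>A. d j)^2 = (d i)^2" by simp
    moreover have "real (card A) = real n - 1" using cA n by (simp add: of_nat_diff)
    ultimately show ?thesis using \<open>(\<Sum>j\<in>A. d j)^2 \<le> (\<Sum>j\<in>A. (d j)^2) * card A\<close> split2 by simp
  qed
  hence key: "real n * (d i)^2 \<le> (real n - 1) * S" by (simp add: algebra_simps)
  have "(d i)^2 \<le> (real n - 1) * (S / real n)"
    using key n by (simp add: field_simps)
  hence "sqrt ((d i)^2) \<le> sqrt ((real n - 1) * (S / real n))"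
    by (rule real_sqrt_le_mono)
  moreover have "batch_std n E = sqrt (S / real n)"
    unfolding batch_std_def S_def d_def \<mu>_def by simp
  ultimately show ?thesis
    by (simp add: d_def \<mu>_def real_sqrt_mult[symmetric] times_divide_eq_right[symmetric] del: times_divide_eq_right)
qed

theorem proposition2:
  fixes n :: nat and E :: "nat \<Rightarrow> real" and eps \<beta> :: real
  assumes "n \<ge> 1" and "eps > 0" and "\<beta> > 0"
  shows "(n = 1 \<longrightarrow> trust_weight n E eps \<beta> 1 = 1 / 2)
     \<and> (n \<ge> 2 \<longrightarrow> (\<forall>i\<in>{1..n}.
            sigmoid (- \<beta> * sqrt (real n - 1)) \<le> trust_weight n E eps \<beta> i
          \<and> trust_weight n E eps \<beta> i \<le> sigmoid (\<beta> * sqrt (real n - 1))))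
     \<and> (\<forall>i\<in>{1..n}. 0 < trust_weight n E eps \<beta> i \<and> trust_weight n E eps \<beta> i < 1)"
proof (intro conjI impI ballI)
  have bnd: "\<bar>normalized_energy n E eps i\<bar> \<le> sqrt (real n - 1)" if i: "i \<in> {1..n}" for i
  proof -
    define s where "s = batch_std n E"
    have s0: "s \<ge> 0" unfolding s_def batch_std_def by (simp add: sum_nonneg)
    have h: "\<bar>E i - batch_mean n E\<bar> \<le> sqrt (real n - 1) * s"
      using samuelson[OF assms(1) i] s_def by simp
    have pos: "s + eps > 0" using s0 assms(2) by simp
    have "\<bar>normalized_energy n E eps i\<bar> = \<bar>E i - batch_mean n E\<bar> / (s + eps)"
      unfolding normalized_energy_def s_def using pos s_def by simp
    also have "\<dots> \<le> sqrt (real n - 1) * s / (s + eps)"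
      using h pos by (simp add: divide_right_mono)
    also have "\<dots> \<le> sqrt (real n - 1)"
    proof -
      have "sqrt (real n - 1) * s \<le> sqrt (real n - 1) * (s + eps)"
        using assms(1,2) by (intro mult_left_mono) auto
      thus ?thesis using pos by (simp add: divide_le_eq)
    qed
    finally show ?thesis .
  qed
  {
    assume "n = 1"
    hence "\<bar>normalized_energy n E eps 1\<bar> \<le> 0" using bnd[of 1] by simp
    thus "trust_weight n E eps \<beta> 1 = 1 / 2"
      unfolding trust_weight_def sigmoid_def by simp
  }
  fix i assume i: "i \<in> {1..n}"
  have b: "\<bar>normalized_energy n E eps i\<bar> \<le> sqrt (real n - 1)" using bnd[OF i] .
  have "- \<beta> * sqrt (real n - 1) \<le> - \<beta> * normalized_energy n E eps i"
    using b assms(3) by (simp add: mult_left_mono)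
  thus "sigmoid (- \<beta> * sqrt (real n - 1)) \<le> trust_weight n E eps \<beta> i"
    unfolding trust_weight_def by (rule sigmoid_mono)
  have "- normalized_energy n E eps i \<le> sqrt (real n - 1)" using b by simp
  hence "\<beta> * (- normalized_energy n E eps i) \<le> \<beta> * sqrt (real n - 1)"
    using assms(3) by (intro mult_left_mono) auto
  hence "- \<beta> * normalized_energy n E eps i \<le> \<beta> * sqrt (real n - 1)" by simp
  thus "trust_weight n E eps \<beta> i \<le> sigmoid (\<beta> * sqrt (real n - 1))"
    unfolding trust_weight_def by (rule sigmoid_mono)
next
  fix i
  show "0 < trust_weight n E eps \<beta> i" "trust_weight n E eps \<beta> i < 1"
    unfolding trust_weight_def using sigmoid_bounds by auto
qed

end
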